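(* Let $(A,d,\Delta)$ be a mixed chain complex over a field. If it satisfies the $d\Delta$-condition then it is semi-classical, and if it is semi-classical then it admits non-commutative Hodge-to-de Rham degeneration data.
   Context: A mixed chain complex is a graded vector space $A$ with two anticommuting square-zero operators $d$ of degree $-1$ and $\Delta$ of degree $+1$. The $d\Delta$-condition is $\mathrm{Ker}\,d\cap\mathrm{Ker}\,\Delta\cap(\mathrm{Im}\,d+\mathrm{Im}\,\Delta)=\mathrm{Im}\,d\Delta=\mathrm{Im}\,\Delta d$. The complex is semi-classical if every homology class of $(A,d)$ has a representative in $\mathrm{Ker}\,\Delta$. Non-commutative Hodge-to-de Rham degeneration data is a deformation retract $p:(A,d)\to(H(A),0)$, $i:(H(A),0)\to(A,d)$, $h$ of degree $1$ on $A$, with $pi=\mathrm{id}$, $\mathrm{id}_A-ip=dh+hd$, such that $p(\Delta h)^{m-1}\Delta i=0$ for all $m\ge1$. *)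

theory Defs
  imports Complex_Main
begin

definition graded :: "('k::field \<Rightarrow> 'v::ab_group_add \<Rightarrow> 'v) \<Rightarrow> (int \<Rightarrow> 'v set) \<Rightarrow> bool" where
  "graded scale G \<longleftrightarrow>
     (\<forall>n. module.subspace scale (G n)) \<and>
     (\<forall>v. \<exists>!c :: int \<Rightarrow> 'v. finite {n. c n \<noteq> 0} \<and> (\<forall>n. c n \<in> G n) \<and>
                         v = (\<Sum>n\<in>{n. c n \<noteq> 0}. c n))"

definition hom_map :: "('k::field \<Rightarrow> 'v::ab_group_add \<Rightarrow> 'v) \<Rightarrow> (int \<Rightarrow> 'v set) \<Rightarrow> int \<Rightarrow> ('v \<Rightarrow> 'v) \<Rightarrow> bool" where
  "hom_map scale G k f \<longleftrightarrow> Vector_Spaces.linear scale scale f \<and> (\<forall>n. f ` G n \<subseteq> G (n + k))"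

definition mixed_complex ::
  "('k::field \<Rightarrow> 'v::ab_group_add \<Rightarrow> 'v) \<Rightarrow> (int \<Rightarrow> 'v set) \<Rightarrow> ('v \<Rightarrow> 'v) \<Rightarrow> ('v \<Rightarrow> 'v) \<Rightarrow> bool" where
  "mixed_complex scale G d \<Delta> \<longleftrightarrow>
     vector_space scale \<and> graded scale G \<and>
     hom_map scale G (-1) d \<and> hom_map scale G 1 \<Delta> \<and>
     (\<forall>x. d (d x) = 0) \<and> (\<forall>x. \<Delta> (\<Delta> x) = 0) \<and> (\<forall>x. d (\<Delta> x) + \<Delta> (d x) = 0)"

definition dDelta_condition :: "('v::ab_group_add \<Rightarrow> 'v) \<Rightarrow> ('v \<Rightarrow> 'v) \<Rightarrow> bool" where
  "dDelta_condition d \<Delta> \<longleftrightarrow>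
     {x. d x = 0} \<inter> {x. \<Delta> x = 0} \<inter> {a + b | a b. a \<in> range d \<and> b \<in> range \<Delta>}
        = range (d \<circ> \<Delta>)
     \<and> range (d \<circ> \<Delta>) = range (\<Delta> \<circ> d)"

definition semi_classical :: "('v::ab_group_add \<Rightarrow> 'v) \<Rightarrow> ('v \<Rightarrow> 'v) \<Rightarrow> bool" where
  "semi_classical d \<Delta> \<longleftrightarrow>
     (\<forall>z. d z = 0 \<longrightarrow> (\<exists>w. d w = 0 \<and> \<Delta> w = 0 \<and> z - w \<in> range d))"

text \<open>The homology H(A) of (A,d), realised as the set of cosets z + Im d with
d z = 0, with its induced vector space operations and grading.\<close>

definition hcls :: "('v::ab_group_add \<Rightarrow> 'v) \<Rightarrow> 'v \<Rightarrow> 'v set" where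
  "hcls d x = {x + b | b. b \<in> range d}"

definition homology :: "('v::ab_group_add \<Rightarrow> 'v) \<Rightarrow> 'v set set" where
  "homology d = {hcls d z | z. d z = 0}"

definition homology_deg :: "(int \<Rightarrow> 'v set) \<Rightarrow> ('v::ab_group_add \<Rightarrow> 'v) \<Rightarrow> int \<Rightarrow> 'v set set" where
  "homology_deg G d n = {hcls d z | z. z \<in> G n \<and> d z = 0}"

definition hadd :: "'v::ab_group_add set \<Rightarrow> 'v set \<Rightarrow> 'v set" where
  "hadd X Y = {x + y | x y. x \<in> X \<and> y \<in> Y}"

definition hscale :: "('k \<Rightarrow> 'v::ab_group_add \<Rightarrow> 'v) \<Rightarrow> ('v \<Rightarrow> 'v) \<Rightarrow> 'k \<Rightarrow> 'v set \<Rightarrow> 'v set" where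
  "hscale scale d c X = {scale c x + b | x b. x \<in> X \<and> b \<in> range d}"

text \<open>Non-commutative Hodge-to-de Rham degeneration data: a deformation retract
p : (A,d) \<rightarrow> (H(A),0), i : (H(A),0) \<rightarrow> (A,d), h of degree 1, with p i = id,
id - i p = d h + h d, and p (Delta h)^(m-1) Delta i = 0 for all m \<ge> 1.\<close>

definition nc_HdR_data ::
  "('k::field \<Rightarrow> 'v::ab_group_add \<Rightarrow> 'v) \<Rightarrow> (int \<Rightarrow> 'v set) \<Rightarrow> ('v \<Rightarrow> 'v) \<Rightarrow> ('v \<Rightarrow> 'v)
   \<Rightarrow> ('v \<Rightarrow> 'v set) \<Rightarrow> ('v set \<Rightarrow> 'v) \<Rightarrow> ('v \<Rightarrow> 'v) \<Rightarrow> bool" where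
  "nc_HdR_data scale G d \<Delta> p i h \<longleftrightarrow>
     \<comment> \<open>p : A \<rightarrow> H(A) linear, of degree 0, chain map to (H(A),0)\<close>
     (\<forall>x. p x \<in> homology d) \<and>
     (\<forall>x y. p (x + y) = hadd (p x) (p y)) \<and>
     (\<forall>c x. p (scale c x) = hscale scale d c (p x)) \<and>
     (\<forall>n. p ` G n \<subseteq> homology_deg G d n) \<and>
     (\<forall>x. p (d x) = hcls d 0) \<and>
     \<comment> \<open>i : H(A) \<rightarrow> A linear, of degree 0, chain map from (H(A),0)\<close>
     (\<forall>X\<in>homology d. \<forall>Y\<in>homology d. i (hadd X Y) = i X + i Y) \<and>
     (\<forall>c. \<forall>X\<in>homology d. i (hscale scale d c X) = scale c (i X)) \<and>
     (\<forall>n. i ` homology_deg G d n \<subseteq> G n) \<and>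
     (\<forall>X\<in>homology d. d (i X) = 0) \<and>
     \<comment> \<open>h homogeneous linear of degree 1\<close>
     hom_map scale G 1 h \<and>
     \<comment> \<open>deformation retract identities\<close>
     (\<forall>X\<in>homology d. p (i X) = X) \<and>
     (\<forall>x. x - i (p x) = d (h x) + h (d x)) \<and>
     \<comment> \<open>degeneration condition\<close>
     (\<forall>m::nat. m \<ge> 1 \<longrightarrow> (\<forall>X\<in>homology d. p (((\<Delta> \<circ> h) ^^ (m - 1)) (\<Delta> (i X))) = hcls d 0))"

end

theory Submission
  imports Defs
begin



lemma lin_add: "Vector_Spaces.linear s s f \<Longrightarrow> f (x + y) = f x + f y"
  by (metis Vector_Spaces.linear_iff)
lemma lin_scale: "Vector_Spaces.linear s s f \<Longrightarrow> f (s c x) = s c (f x)"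
  by (metis Vector_Spaces.linear_iff)
lemma lin_vs: "Vector_Spaces.linear s s f \<Longrightarrow> vector_space s"
  by (metis Vector_Spaces.linear_iff)
lemma lin_addf: assumes "Vector_Spaces.linear s s f" "Vector_Spaces.linear s s g"
  shows "Vector_Spaces.linear s s (\<lambda>x. f x + g x)"
proof -
  have vs: "vector_space s" using lin_vs[OF assms(1)] .
  show ?thesis unfolding Vector_Spaces.linear_iff
    using vs lin_add[OF assms(1)] lin_add[OF assms(2)] lin_scale[OF assms(1)] lin_scale[OF assms(2)]
      vector_space.vector_space_assms(1)[OF vs]
    by (simp add: ac_simps)
qed
lemma lin_comp: assumes "Vector_Spaces.linear s s f" "Vector_Spaces.linear s s g"
  shows "Vector_Spaces.linear s s (\<lambda>x. f (g x))"
  using Vector_Spaces.linear_compose[OF assms(2,1)] by (simp add: comp_def)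
lemma lin_subf: assumes "Vector_Spaces.linear s s f" "Vector_Spaces.linear s s g"
  shows "Vector_Spaces.linear s s (\<lambda>x. f x - g x)"
proof -
  have vs: "vector_space s" using lin_vs[OF assms(1)] .
  show ?thesis unfolding Vector_Spaces.linear_iff
    using vs lin_add[OF assms(1)] lin_add[OF assms(2)] lin_scale[OF assms(1)] lin_scale[OF assms(2)]
      module.scale_right_diff_distrib[OF vs[folded module_iff_vector_space]]
    by (simp add: algebra_simps)
qed
lemma lin_mh: "Vector_Spaces.linear s s f \<Longrightarrow> module_hom s s f"
  by (simp add: module_hom_iff_linear)
lemma lin_0: "Vector_Spaces.linear s s f \<Longrightarrow> f 0 = 0"
  using module_hom.zero[OF lin_mh] by blast
lemma lin_diff: "Vector_Spaces.linear s s f \<Longrightarrow> f (x - y) = f x - f y"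
  using module_hom.diff[OF lin_mh] by blast
lemma lin_sum: "Vector_Spaces.linear s s f \<Longrightarrow> f (sum g A) = (\<Sum>x\<in>A. f (g x))"
  using module_hom.sum[OF lin_mh] by blast

context vector_space begin

lemma core:
  assumes ld: "Vector_Spaces.linear scale scale d" and lD: "Vector_Spaces.linear scale scale \<Delta>"
    and dd: "\<And>x. d (d x) = 0" and sc: "semi_classical d \<Delta>"
  shows "\<exists>P h. Vector_Spaces.linear scale scale P \<and> Vector_Spaces.linear scale scale h \<and>
     (\<forall>x. d (P x) = 0) \<and> (\<forall>x. \<Delta> (P x) = 0) \<and> (\<forall>x. P (d x) = 0) \<and>
     (\<forall>x. x - P x = d (h x) + h (d x))"
proof -
  interpret vp: vector_space_pair scale scale by unfold_locales
  define K where "K = {x. d x = 0 \<and> \<Delta> x = 0}"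
  have sK: "subspace K" unfolding K_def
    by (rule subspaceI) (auto simp: lin_0[OF ld] lin_0[OF lD] lin_add[OF ld] lin_add[OF lD]
        lin_scale[OF ld] lin_scale[OF lD])
  have sR: "subspace (range d)"
  proof (rule subspaceI)
    show "0 \<in> range d" using lin_0[OF ld] by (metis rangeI)
    show "x + y \<in> range d" if "x \<in> range d" "y \<in> range d" for x y
      using that by (auto simp: lin_add[OF ld, symmetric])
    show "c *s x \<in> range d" if "x \<in> range d" for c x
      using that by (auto simp: lin_scale[OF ld, symmetric])
  qed
  obtain Bb where Bb: "Bb \<subseteq> range d" "independent Bb" "range d \<subseteq> span Bb"
    using maximal_independent_subset by blast
  obtain E where E: "Bb \<subseteq> E" "E \<subseteq> K \<union> Bb" "independent E" "K \<union> Bb \<subseteq> span E"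
    using maximal_independent_subset_extend[of Bb "K \<union> Bb"] Bb(2) by blast
  have spBb: "span Bb \<subseteq> range d" using span_minimal[OF Bb(1) sR] .
  have spBbE: "span Bb \<subseteq> span E" using span_mono[OF E(1)] .
  define q where "q = vp.construct E (\<lambda>w. if w \<in> Bb then 0 else w)"
  define r where "r = vp.construct E (\<lambda>w. if w \<in> Bb then w else 0)"
  have lq: "Vector_Spaces.linear scale scale q" unfolding q_def by (rule vp.linear_construct[OF E(3)])
  have lr: "Vector_Spaces.linear scale scale r" unfolding r_def by (rule vp.linear_construct[OF E(3)])
  have lqr: "Vector_Spaces.linear scale scale (\<lambda>z. q z + r z)"
    by (rule lin_addf[OF lq lr])
  have qr: "q z + r z = z" if "z \<in> span E" for z
    using vp.linear_eq_on[OF lqr linear_id that]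
    by (simp add: q_def r_def vp.construct_basis[OF E(3)])
  have qB: "q b = 0" if "b \<in> span Bb" for b
  proof -
    have "\<forall>c\<in>Bb. q c = 0" using E(1) by (auto simp: q_def vp.construct_basis[OF E(3)])
    then have "q b = (\<lambda>_. 0) b" using vp.linear_eq_on[OF lq vp.linear_zero that] by blast
    then show ?thesis by simp
  qed
  have rB: "r b = b" if "b \<in> span Bb" for b
  proof -
    have "\<forall>c\<in>Bb. r c = id c" using E(1) by (auto simp: r_def vp.construct_basis[OF E(3)])
    then have "r b = id b" using vp.linear_eq_on[OF lr linear_id that] by blast
    then show ?thesis by simp
  qed
  have qK: "q x \<in> K" for x
  proof -
    have "q x \<in> span ((\<lambda>w. if w \<in> Bb then 0 else w) ` E)"
      unfolding q_def by (rule vp.construct_in_span[OF E(3)])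
    also have "\<dots> \<subseteq> K"
      using E(2) by (intro span_minimal[OF _ sK]) (auto simp: subspace_0[OF sK])
    finally show ?thesis .
  qed
  have rR: "r x \<in> range d" for x
  proof -
    have "r x \<in> span ((\<lambda>w. if w \<in> Bb then w else 0) ` E)"
      unfolding r_def by (rule vp.construct_in_span[OF E(3)])
    also have "\<dots> \<subseteq> span Bb"
      by (intro span_minimal) (auto simp: span_zero span_base)
    finally show ?thesis using spBb by blast
  qed
  obtain s where ls: "Vector_Spaces.linear scale scale s" and ds: "\<forall>v\<in>d ` UNIV. d (s v) = v"
    using vp.linear_exists_right_inverse_on[OF ld subspace_UNIV] by blast
  define z where "z x = x - s (d x)" for x
  have dz: "d (z x) = 0" for x using ds by (simp add: z_def lin_diff[OF ld])
  have zE: "z x \<in> span E" for x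
  proof -
    obtain w where w: "d w = 0" "\<Delta> w = 0" "z x - w \<in> range d"
      using sc dz unfolding semi_classical_def by blast
    have "w \<in> span E" using w E(4) by (auto simp: K_def intro: span_base)
    moreover have "z x - w \<in> span E" using w(3) Bb(3) spBbE by blast
    ultimately have "w + (z x - w) \<in> span E" by (rule span_add)
    then show ?thesis by simp
  qed
  define P where "P x = q (z x)" for x
  define h where "h x = s (r (z x))" for x
  have lz: "Vector_Spaces.linear scale scale z"
    unfolding z_def[abs_def] by (rule lin_subf[OF linear_id[unfolded id_def] lin_comp[OF ls ld]])
  have lP: "Vector_Spaces.linear scale scale P"
    unfolding P_def[abs_def] by (rule lin_comp[OF lq lz])
  have lh: "Vector_Spaces.linear scale scale h"
    unfolding h_def[abs_def] by (rule lin_comp[OF ls lin_comp[OF lr lz]])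
  have dRB: "d x \<in> span Bb" for x using Bb(3) by blast
  show ?thesis
  proof (intro exI conjI allI)
    show "Vector_Spaces.linear scale scale P" by fact
    show "Vector_Spaces.linear scale scale h" by fact
    show "d (P x) = 0" for x using qK[of "z x"] by (simp add: P_def K_def)
    show "\<Delta> (P x) = 0" for x using qK[of "z x"] by (simp add: P_def K_def)
    show "P (d x) = 0" for x
      by (simp add: P_def z_def dd lin_0[OF ls] qB[OF dRB])
    show "x - P x = d (h x) + h (d x)" for x
    proof -
      have "z (d x) = d x" by (simp add: z_def dd lin_0[OF ls])
      then have "h (d x) = s (d x)" by (simp add: h_def rB[OF dRB])
      moreover have "d (h x) = r (z x)" using ds rR[of "z x"] by (auto simp: h_def)
      moreover have "q (z x) + r (z x) = z x" using qr[OF zE] .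
      ultimately show ?thesis by (simp add: P_def z_def algebra_simps)
    qed
  qed
qed

end


locale gvs = vector_space scale for scale :: "'k::field \<Rightarrow> 'v::ab_group_add \<Rightarrow> 'v" +
  fixes G :: "int \<Rightarrow> 'v set" assumes gr: "graded scale G"
begin

lemma sG: "subspace (G n)" using gr unfolding graded_def by blast
lemma G0: "0 \<in> G n" using subspace_0[OF sG] .
lemma Gadd: "x \<in> G n \<Longrightarrow> y \<in> G n \<Longrightarrow> x + y \<in> G n" using subspace_add[OF sG] .
lemma Gscale: "x \<in> G n \<Longrightarrow> scale c x \<in> G n" using subspace_scale[OF sG] .
lemma Gdiff: "x \<in> G n \<Longrightarrow> y \<in> G n \<Longrightarrow> x - y \<in> G n" using subspace_diff[OF sG] .

definition okc :: "(int \<Rightarrow> 'v) \<Rightarrow> 'v \<Rightarrow> bool" where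
  "okc c x \<longleftrightarrow> finite {n. c n \<noteq> 0} \<and> (\<forall>n. c n \<in> G n) \<and> x = (\<Sum>n\<in>{n. c n \<noteq> 0}. c n)"

definition comp :: "'v \<Rightarrow> int \<Rightarrow> 'v" where "comp x = (THE c. okc c x)"
definition supp :: "'v \<Rightarrow> int set" where "supp x = {n. comp x n \<noteq> 0}"

lemma ex1: "\<exists>!c. okc c x" using gr unfolding graded_def okc_def by blast

lemma comp_ok: "okc (comp x) x" unfolding comp_def by (rule theI'[OF ex1])

lemma comp_G: "comp x n \<in> G n" using comp_ok[of x] by (simp add: okc_def)
lemma fin_supp: "finite (supp x)" using comp_ok[of x] by (simp add: okc_def supp_def)
lemma comp_sum: "(\<Sum>n\<in>supp x. comp x n) = x" using comp_ok[of x] by (simp add: okc_def supp_def)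

lemma comp_unique:
  assumes "finite S" "\<And>n. c n \<in> G n" "\<And>n. n \<notin> S \<Longrightarrow> c n = 0" "x = sum c S"
  shows "comp x = c"
proof -
  have sub: "{n. c n \<noteq> 0} \<subseteq> S" using assms(3) by blast
  have fin: "finite {n. c n \<noteq> 0}" using finite_subset[OF sub assms(1)] .
  have "sum c S = sum c {n. c n \<noteq> 0}"
    by (rule sum.mono_neutral_right[OF assms(1) sub]) auto
  then have "okc c x" using fin assms(2,4) by (simp add: okc_def)
  then show ?thesis unfolding comp_def using ex1 by (rule the1_equality[rotated])
qed

lemma comp_sumT: assumes "finite T" "supp x \<subseteq> T" shows "sum (comp x) T = x"
proof -
  have "sum (comp x) T = sum (comp x) (supp x)"
    by (rule sum.mono_neutral_right[OF assms]) (simp add: supp_def)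
  then show ?thesis using comp_sum[of x] by simp
qed

lemma comp_add: "comp (x + y) = (\<lambda>n. comp x n + comp y n)"
proof (rule comp_unique[of "supp x \<union> supp y"])
  show "finite (supp x \<union> supp y)" using fin_supp by simp
  show "comp x n + comp y n \<in> G n" for n using Gadd comp_G by blast
  show "n \<notin> supp x \<union> supp y \<Longrightarrow> comp x n + comp y n = 0" for n by (simp add: supp_def)
  show "x + y = (\<Sum>n\<in>supp x \<union> supp y. comp x n + comp y n)"
    by (simp add: sum.distrib comp_sumT fin_supp)
qed

lemma comp_scale: "comp (scale a x) = (\<lambda>n. scale a (comp x n))"
proof (rule comp_unique[of "supp x"])
  show "finite (supp x)" using fin_supp by simp
  show "scale a (comp x n) \<in> G n" for n using Gscale comp_G by blast
  show "n \<notin> supp x \<Longrightarrow> scale a (comp x n) = 0" for n by (simp add: supp_def)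
  show "scale a x = (\<Sum>n\<in>supp x. scale a (comp x n))"
    by (simp add: scale_sum_right[symmetric] comp_sum)
qed

lemma comp_0: "comp 0 = (\<lambda>n. 0)"
  by (rule comp_unique[of "{}"]) (auto simp: G0)

lemma comp_diff: "comp (x - y) n = comp x n - comp y n"
  using comp_add[of "x - y" y] by (metis add_diff_cancel diff_add_cancel)

lemma comp_elem: "x \<in> G m \<Longrightarrow> comp x = (\<lambda>n. if n = m then x else 0)"
  by (rule comp_unique[of "{m}"]) (auto simp: G0)

lemma comp_elem_supp: "x \<in> G m \<Longrightarrow> supp x \<subseteq> {m}"
  by (auto simp: supp_def comp_elem)

lemma comp_hom:
  assumes f: "hom_map scale G k f"
  shows "comp (f x) = (\<lambda>n. f (comp x (n - k)))"
proof -
  have lf: "Vector_Spaces.linear scale scale f" and fG: "\<And>n. f ` G n \<subseteq> G (n + k)"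
    using f by (auto simp: hom_map_def)
  show ?thesis
  proof (rule comp_unique[of "(\<lambda>n. n + k) ` supp x"])
    show "finite ((\<lambda>n. n + k) ` supp x)" using fin_supp by simp
    show "f (comp x (n - k)) \<in> G n" for n using fG[of "n - k"] comp_G[of x "n - k"] by auto
    show "f (comp x (n - k)) = 0" if "n \<notin> (\<lambda>n. n + k) ` supp x" for n
    proof -
      have "n - k \<notin> supp x" using that by (metis (no_types, lifting) diff_add_cancel image_eqI)
      then show ?thesis by (simp add: supp_def lin_0[OF lf])
    qed
    have "(\<Sum>n\<in>(\<lambda>n. n + k) ` supp x. f (comp x (n - k))) = (\<Sum>n\<in>supp x. f (comp x n))"
      by (subst sum.reindex) (auto simp: inj_on_def)
    also have "\<dots> = f x" using lin_sum[OF lf, of "comp x" "supp x"] comp_sum[of x] by simp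
    finally show "f x = (\<Sum>n\<in>(\<lambda>n. n + k) ` supp x. f (comp x (n - k)))" by simp
  qed
qed

definition Hk :: "int \<Rightarrow> ('v \<Rightarrow> 'v) \<Rightarrow> 'v \<Rightarrow> 'v" where
  "Hk k f x = (\<Sum>n\<in>supp x. comp (f (comp x n)) (n + k))"

lemma HkT:
  assumes lf: "Vector_Spaces.linear scale scale f" and T: "finite T" "supp x \<subseteq> T"
  shows "Hk k f x = (\<Sum>n\<in>T. comp (f (comp x n)) (n + k))"
  unfolding Hk_def
  by (rule sum.mono_neutral_left[OF T(1) T(2)]) (auto simp: supp_def lin_0[OF lf] comp_0)

lemma Hk_add:
  assumes lf: "Vector_Spaces.linear scale scale f"
  shows "Hk k f (x + y) = Hk k f x + Hk k f y"
proof -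
  let ?T = "supp x \<union> supp y"
  have fT: "finite ?T" using fin_supp by simp
  have "supp (x + y) \<subseteq> ?T" by (auto simp: supp_def comp_add)
  then have "Hk k f (x + y) = (\<Sum>n\<in>?T. comp (f (comp (x + y) n)) (n + k))" by (rule HkT[OF lf fT])
  also have "\<dots> = (\<Sum>n\<in>?T. comp (f (comp x n)) (n + k)) + (\<Sum>n\<in>?T. comp (f (comp y n)) (n + k))"
    by (simp add: comp_add lin_add[OF lf] sum.distrib)
  also have "\<dots> = Hk k f x + Hk k f y"
    by (simp add: HkT[OF lf fT])
  finally show ?thesis .
qed

lemma Hk_scale:
  assumes lf: "Vector_Spaces.linear scale scale f"
  shows "Hk k f (scale a x) = scale a (Hk k f x)"
proof -
  have "supp (scale a x) \<subseteq> supp x" by (auto simp: supp_def comp_scale)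
  then have "Hk k f (scale a x) = (\<Sum>n\<in>supp x. comp (f (comp (scale a x) n)) (n + k))"
    by (rule HkT[OF lf fin_supp])
  also have "\<dots> = scale a (Hk k f x)"
    by (simp add: comp_scale lin_scale[OF lf] Hk_def scale_sum_right)
  finally show ?thesis .
qed

lemma Hk_lin:
  assumes lf: "Vector_Spaces.linear scale scale f"
  shows "Vector_Spaces.linear scale scale (Hk k f)"
  unfolding Vector_Spaces.linear_iff using Hk_add[OF lf] Hk_scale[OF lf] vector_space_axioms by blast

lemma Hk_hom:
  assumes lf: "Vector_Spaces.linear scale scale f"
  shows "hom_map scale G k (Hk k f)"
  unfolding hom_map_def
proof (intro conjI allI Hk_lin[OF lf] subsetI)
  fix m y assume "y \<in> Hk k f ` G m"
  then obtain x where x: "x \<in> G m" "y = Hk k f x" by blast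
  have "Hk k f x = (\<Sum>n\<in>{m}. comp (f (comp x n)) (n + k))"
    by (rule HkT[OF lf _ comp_elem_supp[OF x(1)]]) simp
  then show "y \<in> G (m + k)" using x comp_G by simp
qed

lemma Hk_id: "Hk 0 (\<lambda>x. x) x = x"
  unfolding Hk_def using comp_sum[of x] by (simp add: comp_elem[OF comp_G])

lemma Hk_pre:
  assumes lf: "Vector_Spaces.linear scale scale f" and g: "hom_map scale G j g"
  shows "Hk k f (g x) = Hk (k + j) (\<lambda>y. f (g y)) x"
proof -
  have lg: "Vector_Spaces.linear scale scale g" using g by (simp add: hom_map_def)
  let ?T = "(\<lambda>n. n + j) ` supp x"
  have fT: "finite ?T" using fin_supp by simp
  have sub: "supp (g x) \<subseteq> ?T"
  proof
    fix n assume "n \<in> supp (g x)"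
    then have "comp x (n - j) \<noteq> 0" by (auto simp: supp_def comp_hom[OF g] lin_0[OF lg])
    then have "n - j \<in> supp x" by (simp add: supp_def)
    then show "n \<in> ?T" by (metis diff_add_cancel image_eqI)
  qed
  have inj: "inj_on (\<lambda>n. n + j) (supp x)" by (simp add: inj_on_def)
  have e1: "comp (g x) (n + j) = g (comp x n)" for n by (simp add: comp_hom[OF g])
  have e2: "n + j + k = n + (k + j)" for n :: int by simp
  have "Hk k f (g x) = (\<Sum>n\<in>?T. comp (f (comp (g x) n)) (n + k))" by (rule HkT[OF lf fT sub])
  also have "\<dots> = (\<Sum>n\<in>supp x. comp (f (comp (g x) (n + j))) (n + j + k))"
    by (simp only: sum.reindex[OF inj] o_def)
  also have "\<dots> = (\<Sum>n\<in>supp x. comp (f (g (comp x n))) (n + (k + j)))"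
    by (simp only: e1 e2)
  also have "\<dots> = Hk (k + j) (\<lambda>y. f (g y)) x" by (simp add: Hk_def)
  finally show ?thesis .
qed

lemma Hk_post:
  assumes g: "hom_map scale G j g"
  shows "g (Hk k f x) = Hk (k + j) (\<lambda>y. g (f y)) x"
proof -
  have lg: "Vector_Spaces.linear scale scale g" using g by (simp add: hom_map_def)
  have e: "g (comp z (n + k)) = comp (g z) (n + (k + j))" for z n
  proof -
    have a: "n + (k + j) - j = n + k" by simp
    have "comp (g z) (n + (k + j)) = g (comp z (n + (k + j) - j))"
      using fun_cong[OF comp_hom[OF g, of z], of "n + (k + j)"] by (simp only:)
    then show ?thesis by (simp only: a)
  qed
  have "g (Hk k f x) = (\<Sum>n\<in>supp x. g (comp (f (comp x n)) (n + k)))"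
    unfolding Hk_def by (rule lin_sum[OF lg])
  also have "\<dots> = Hk (k + j) (\<lambda>y. g (f y)) x"
    unfolding Hk_def by (rule sum.cong[OF refl]) (rule e)
  finally show ?thesis .
qed

lemma Hk_addf:
  "Hk k (\<lambda>y. f1 y + f2 y) x = Hk k f1 x + Hk k f2 x"
  unfolding Hk_def by (simp only: comp_add sum.distrib)

lemma Hk_subf:
  "Hk k (\<lambda>y. f1 y - f2 y) x = Hk k f1 x - Hk k f2 x"
  unfolding Hk_def by (simp only: comp_diff sum_subtractf)

lemma Hk_zero: "Hk k (\<lambda>y. 0) x = 0"
  unfolding Hk_def by (simp only: comp_0 sum.neutral_const)

end


lemma part1:
  assumes ld: "Vector_Spaces.linear s s d" and lD: "Vector_Spaces.linear s s \<Delta>"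
    and dd: "\<forall>x. d (d x) = 0" and DD: "\<forall>x. \<Delta> (\<Delta> x) = 0"
    and anti: "\<forall>x. d (\<Delta> x) + \<Delta> (d x) = 0" and c: "dDelta_condition d \<Delta>"
  shows "semi_classical d \<Delta>"
  unfolding semi_classical_def
proof (intro allI impI)
  fix z assume dz: "d z = 0"
  have dDz: "d (\<Delta> z) = 0" using anti dz lin_0[OF lD] by (metis add.right_neutral)
  have DDz: "\<Delta> (\<Delta> z) = 0" using DD by blast
  have "\<Delta> z = d 0 + \<Delta> z" by (simp add: lin_0[OF ld])
  then have "\<Delta> z \<in> {a + b |a b. a \<in> range d \<and> b \<in> range \<Delta>}" by blast
  then have "\<Delta> z \<in> range (d \<circ> \<Delta>)" using c dDz DDz unfolding dDelta_condition_def by blast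
  then have "\<Delta> z \<in> range (\<Delta> \<circ> d)" using c unfolding dDelta_condition_def by simp
  then obtain y where y: "\<Delta> z = \<Delta> (d y)" by auto
  show "\<exists>w. d w = 0 \<and> \<Delta> w = 0 \<and> z - w \<in> range d"
  proof (intro exI conjI)
    show "d (z - d y) = 0" using dz dd by (simp add: lin_diff[OF ld])
    show "\<Delta> (z - d y) = 0" using y by (simp add: lin_diff[OF lD])
    show "z - (z - d y) \<in> range d" by simp
  qed
qed

lemma hcls_eq:
  assumes ld: "Vector_Spaces.linear s s d"
  shows "hcls d a = hcls d b \<longleftrightarrow> a - b \<in> range d"
proof
  assume "hcls d a = hcls d b"
  moreover have "a \<in> hcls d a"
  proof -
    have "a + d 0 \<in> hcls d a" unfolding hcls_def by blast
    then show ?thesis by (simp add: lin_0[OF ld])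
  qed
  ultimately have "a \<in> hcls d b" by simp
  then obtain c where "a = b + d c" unfolding hcls_def by auto
  then show "a - b \<in> range d" by simp
next
  assume "a - b \<in> range d"
  then obtain c where c: "a - b = d c" by auto
  show "hcls d a = hcls d b"
  proof (rule set_eqI, rule iffI)
    fix x assume "x \<in> hcls d a"
    then obtain e where "x = a + d e" unfolding hcls_def by auto
    then have "x = b + d (c + e)" using c by (simp add: lin_add[OF ld] algebra_simps)
    then show "x \<in> hcls d b" unfolding hcls_def by blast
  next
    fix x assume "x \<in> hcls d b"
    then obtain e where "x = b + d e" unfolding hcls_def by auto
    then have "x = a + d (e - c)" using c by (simp add: lin_diff[OF ld] algebra_simps)
    then show "x \<in> hcls d a" unfolding hcls_def by blast
  qed
qed

lemma hadd_hcls: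
  assumes ld: "Vector_Spaces.linear s s d"
  shows "hadd (hcls d a) (hcls d b) = hcls d (a + b)"
proof (rule set_eqI, rule iffI)
  fix x assume "x \<in> hadd (hcls d a) (hcls d b)"
  then obtain e f where "x = (a + d e) + (b + d f)" unfolding hadd_def hcls_def by auto
  then have "x = (a + b) + d (e + f)" by (simp add: lin_add[OF ld] algebra_simps)
  then show "x \<in> hcls d (a + b)" unfolding hcls_def by blast
next
  fix x assume "x \<in> hcls d (a + b)"
  then obtain e where "x = (a + b) + d e" unfolding hcls_def by auto
  then have "x = (a + d e) + (b + d 0)" by (simp add: lin_0[OF ld] algebra_simps)
  then show "x \<in> hadd (hcls d a) (hcls d b)" unfolding hadd_def hcls_def by blast
qed

lemma hscale_hcls:
  assumes ld: "Vector_Spaces.linear s s d"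
  shows "hscale s d c (hcls d a) = hcls d (s c a)"
proof -
  have vs: "vector_space s" using lin_vs[OF ld] .
  have dist: "s c (x + y) = s c x + s c y" for x y using vector_space.vector_space_assms(1)[OF vs] .
  show ?thesis
  proof (rule set_eqI, rule iffI)
    fix x assume "x \<in> hscale s d c (hcls d a)"
    then obtain e f where "x = s c (a + d e) + d f" unfolding hscale_def hcls_def by auto
    then have "x = s c a + d (s c e + f)" by (simp add: dist lin_add[OF ld] lin_scale[OF ld] add.assoc)
    then show "x \<in> hcls d (s c a)" unfolding hcls_def by blast
  next
    fix x assume "x \<in> hcls d (s c a)"
    then obtain e where "x = s c a + d e" unfolding hcls_def by auto
    moreover have "a + d 0 \<in> hcls d a" unfolding hcls_def by blast
    moreover have "s c (a + d 0) = s c a" by (simp add: lin_0[OF ld])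
    ultimately show "x \<in> hscale s d c (hcls d a)" unfolding hscale_def by (metis (mono_tags, lifting) CollectI rangeI)
  qed
qed

lemma part2:
  assumes mc: "mixed_complex scale G d \<Delta>" and sc: "semi_classical d \<Delta>"
  shows "\<exists>p i h. nc_HdR_data scale G d \<Delta> p i h"
proof -
  have vs: "vector_space scale" and gr: "graded scale G" and hd: "hom_map scale G (-1) d"
    and hD: "hom_map scale G 1 \<Delta>" and dd: "\<And>x. d (d x) = 0"
    using mc unfolding mixed_complex_def by auto
  have ld: "Vector_Spaces.linear scale scale d" using hd by (simp add: hom_map_def)
  have lD: "Vector_Spaces.linear scale scale \<Delta>" using hD by (simp add: hom_map_def)
  interpret g: gvs scale G using vs gr by (simp add: gvs_def gvs_axioms_def)
  obtain P0 h0 where lP0: "Vector_Spaces.linear scale scale P0" and lh0: "Vector_Spaces.linear scale scale h0"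
    and dP0: "\<forall>x. d (P0 x) = 0" and DP0: "\<forall>x. \<Delta> (P0 x) = 0" and P0d: "\<forall>x. P0 (d x) = 0"
    and hom0: "\<forall>x. x - P0 x = d (h0 x) + h0 (d x)"
    using g.core[OF ld lD dd sc] by blast
  define P where "P = g.Hk 0 P0"
  define h1 where "h1 = g.Hk 1 h0"
  have lP: "Vector_Spaces.linear scale scale P" unfolding P_def by (rule g.Hk_lin[OF lP0])
  have hP: "hom_map scale G 0 P" unfolding P_def by (rule g.Hk_hom[OF lP0])
  have lh1: "Vector_Spaces.linear scale scale h1" unfolding h1_def by (rule g.Hk_lin[OF lh0])
  have hh1: "hom_map scale G 1 h1" unfolding h1_def by (rule g.Hk_hom[OF lh0])
  have dP: "d (P x) = 0" for x
  proof -
    have "d (P x) = g.Hk (0 + -1) (\<lambda>y. d (P0 y)) x" unfolding P_def by (rule g.Hk_post[OF hd])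
    also have "(\<lambda>y. d (P0 y)) = (\<lambda>y. 0)" using dP0 by auto
    finally show ?thesis by (simp add: g.Hk_zero)
  qed
  have DP: "\<Delta> (P x) = 0" for x
  proof -
    have "\<Delta> (P x) = g.Hk (0 + 1) (\<lambda>y. \<Delta> (P0 y)) x" unfolding P_def by (rule g.Hk_post[OF hD])
    also have "(\<lambda>y. \<Delta> (P0 y)) = (\<lambda>y. 0)" using DP0 by auto
    finally show ?thesis by (simp add: g.Hk_zero)
  qed
  have Pd: "P (d x) = 0" for x
  proof -
    have "P (d x) = g.Hk (0 + -1) (\<lambda>y. P0 (d y)) x" unfolding P_def by (rule g.Hk_pre[OF lP0 hd])
    also have "(\<lambda>y. P0 (d y)) = (\<lambda>y. 0)" using P0d by auto
    finally show ?thesis by (simp add: g.Hk_zero)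
  qed
  have homot: "x - P x = d (h1 x) + h1 (d x)" for x
  proof -
    have a: "d (h1 x) = g.Hk (1 + -1) (\<lambda>y. d (h0 y)) x" unfolding h1_def by (rule g.Hk_post[OF hd])
    have b: "h1 (d x) = g.Hk (1 + -1) (\<lambda>y. h0 (d y)) x" unfolding h1_def by (rule g.Hk_pre[OF lh0 hd])
    have "d (h1 x) + h1 (d x) = g.Hk 0 (\<lambda>y. d (h0 y) + h0 (d y)) x"
      unfolding a b by (simp add: g.Hk_addf)
    also have "(\<lambda>y. d (h0 y) + h0 (d y)) = (\<lambda>y. y - P0 y)" using hom0 by auto
    also have "g.Hk 0 (\<lambda>y. y - P0 y) x = g.Hk 0 (\<lambda>y. y) x - g.Hk 0 P0 x" by (rule g.Hk_subf)
    finally show ?thesis by (simp add: g.Hk_id P_def)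
  qed
  have cyc: "z - P z = d (h1 z)" if "d z = 0" for z
    using homot[of z] that lin_0[OF lh1] by simp
  define h where "h x = h1 x + h1 (P x)" for x
  have hh: "hom_map scale G 1 h"
    unfolding hom_map_def
  proof (intro conjI allI subsetI)
    show "Vector_Spaces.linear scale scale h" unfolding h_def[abs_def]
      by (rule lin_addf[OF lh1 lin_comp[OF lh1 lP]])
    fix n y assume "y \<in> h ` G n"
    then obtain x where x: "x \<in> G n" "y = h x" by blast
    have "P x \<in> G n" using hP x(1) unfolding hom_map_def by force
    then have "h1 (P x) \<in> G (n + 1)" using hh1 unfolding hom_map_def by blast
    moreover have "h1 x \<in> G (n + 1)" using hh1 x(1) unfolding hom_map_def by blast
    ultimately show "y \<in> G (n + 1)" using x(2) g.Gadd by (simp add: h_def)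
  qed
  define p where "p x = hcls d (P x)" for x
  define i where "i X = P (SOME z. d z = 0 \<and> X = hcls d z)" for X
  have iX: "i (hcls d z) = P z" if "d z = 0" for z
  proof -
    let ?z = "SOME z'. d z' = 0 \<and> hcls d z = hcls d z'"
    have "d ?z = 0 \<and> hcls d z = hcls d ?z" by (rule someI[of _ z]) (simp add: that)
    then have "z - ?z \<in> range d" by (simp add: hcls_eq[OF ld])
    then obtain c where "z - ?z = d c" by auto
    then have "P z - P ?z = 0" using Pd by (metis lin_diff[OF lP])
    then show ?thesis by (simp add: i_def)
  qed
  have homd: "X \<in> homology d \<longleftrightarrow> (\<exists>z. d z = 0 \<and> X = hcls d z)" for X
    by (auto simp: homology_def)
  show ?thesis
    unfolding nc_HdR_data_def
  proof (rule exI[of _ p], rule exI[of _ i], rule exI[of _ h], intro conjI allI ballI impI)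
    show "p x \<in> homology d" for x using dP by (auto simp: homd p_def)
    show "p (x + y) = hadd (p x) (p y)" for x y
      by (simp add: p_def lin_add[OF lP] hadd_hcls[OF ld])
    show "p (scale c x) = hscale scale d c (p x)" for c x
      by (simp add: p_def lin_scale[OF lP] hscale_hcls[OF ld])
    show "p ` G n \<subseteq> homology_deg G d n" for n
    proof
      fix y assume "y \<in> p ` G n"
      then obtain x where "x \<in> G n" "y = p x" by blast
      moreover have "P x \<in> G n" using hP \<open>x \<in> G n\<close> unfolding hom_map_def by force
      ultimately show "y \<in> homology_deg G d n" using dP by (auto simp: homology_deg_def p_def)
    qed
    show "p (d x) = hcls d 0" for x by (simp add: p_def Pd)
    show "i (hadd X Y) = i X + i Y" if XH: "X \<in> homology d" and YH: "Y \<in> homology d" for X Y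
    proof -
      obtain a where "d a = 0" "X = hcls d a" using XH unfolding homology_def by blast
      moreover obtain b where "d b = 0" "Y = hcls d b" using YH unfolding homology_def by blast
      ultimately show ?thesis
        by (simp add: hadd_hcls[OF ld] iX lin_add[OF ld] lin_add[OF lP])
    qed
    show "i (hscale scale d c X) = scale c (i X)" if XH: "X \<in> homology d" for c X
    proof -
      obtain a where "d a = 0" "X = hcls d a" using XH unfolding homology_def by blast
      then show ?thesis
        by (simp add: hscale_hcls[OF ld] iX lin_scale[OF ld] lin_scale[OF lP])
    qed
    show "i ` homology_deg G d n \<subseteq> G n" for n
    proof
      fix y assume "y \<in> i ` homology_deg G d n"
      then obtain z where z: "z \<in> G n" "d z = 0" "y = i (hcls d z)"
        by (auto simp: homology_deg_def)
      then have "y = P z" by (simp add: iX)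
      then show "y \<in> G n" using hP z(1) unfolding hom_map_def by force
    qed
    show "d (i X) = 0" if XH: "X \<in> homology d" for X
    proof -
      obtain a where "d a = 0" "X = hcls d a" using XH unfolding homology_def by blast
      then show ?thesis by (simp add: iX dP)
    qed
    show "hom_map scale G 1 h" by fact
    show "p (i X) = X" if XH: "X \<in> homology d" for X
    proof -
      obtain z where z: "d z = 0" "X = hcls d z" using XH unfolding homology_def by blast
      have e1: "P z - P (P z) = d (h1 (P z))" using cyc[OF dP[of z]] .
      have e2: "z - P z = d (h1 z)" using cyc[OF z(1)] .
      have "P (P z) - z = - (z - P z) - (P z - P (P z))" by (simp add: algebra_simps)
      also have "\<dots> = - d (h1 z) - d (h1 (P z))" by (simp only: e1 e2)
      also have "\<dots> = d (- h1 z - h1 (P z))" by (simp add: lin_diff[OF ld] module_hom.neg[OF lin_mh[OF ld]])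
      finally have "P (P z) - z \<in> range d" by simp
      then have "hcls d (P (P z)) = hcls d z" by (simp add: hcls_eq[OF ld])
      then show ?thesis using z by (simp add: iX p_def)
    qed
    show "x - i (p x) = d (h x) + h (d x)" for x
    proof -
      have ip: "i (p x) = P (P x)" by (simp add: p_def iX dP)
      have e: "P x - P (P x) = d (h1 (P x))" using cyc[OF dP[of x]] .
      have hd': "h (d x) = h1 (d x)" by (simp add: h_def Pd lin_0[OF lh1])
      have dh': "d (h x) = d (h1 x) + d (h1 (P x))" by (simp add: h_def lin_add[OF ld])
      have "x - i (p x) = (x - P x) + (P x - P (P x))" by (simp add: ip algebra_simps)
      also have "\<dots> = (d (h1 x) + h1 (d x)) + d (h1 (P x))" by (subst e, subst homot, rule refl)
      also have "\<dots> = d (h x) + h (d x)" by (simp only: hd' dh' ac_simps)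
      finally show ?thesis .
    qed
    fix m :: nat and X assume "1 \<le> m" "X \<in> homology d"
    then obtain z where z: "d z = 0" "X = hcls d z" by (auto simp: homd)
    have D0: "\<Delta> (i X) = 0" using z by (simp add: iX DP)
    have hl0: "h 0 = 0" using hh unfolding hom_map_def by (blast intro: lin_0)
    have "((\<Delta> \<circ> h) ^^ k) 0 = 0" for k
      by (induction k) (simp_all add: hl0 lin_0[OF lD])
    then show "p (((\<Delta> \<circ> h) ^^ (m - 1)) (\<Delta> (i X))) = hcls d 0"
      by (simp add: D0 p_def lin_0[OF lP])
  qed
qed


theorem mainTheorem17:
  fixes scale :: "'k::field \<Rightarrow> 'v::ab_group_add \<Rightarrow> 'v"
    and G :: "int \<Rightarrow> 'v set"
    and d \<Delta> :: "'v \<Rightarrow> 'v"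
  assumes "mixed_complex scale G d \<Delta>"
  shows "(dDelta_condition d \<Delta> \<longrightarrow> semi_classical d \<Delta>) \<and>
         (semi_classical d \<Delta> \<longrightarrow> (\<exists>p i h. nc_HdR_data scale G d \<Delta> p i h))"
proof (intro conjI impI)
  have hd: "hom_map scale G (-1) d" and hD: "hom_map scale G 1 \<Delta>"
    and dd: "\<forall>x. d (d x) = 0" and DD: "\<forall>x. \<Delta> (\<Delta> x) = 0"
    and anti: "\<forall>x. d (\<Delta> x) + \<Delta> (d x) = 0"
    using assms unfolding mixed_complex_def by auto
  have ld: "Vector_Spaces.linear scale scale d" using hd by (simp add: hom_map_def)
  have lD: "Vector_Spaces.linear scale scale \<Delta>" using hD by (simp add: hom_map_def)
  show "semi_classical d \<Delta>" if "dDelta_condition d \<Delta>"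
    by (rule part1[OF ld lD dd DD anti that])
  show "\<exists>p i h. nc_HdR_data scale G d \<Delta> p i h" if "semi_classical d \<Delta>"
    by (rule part2[OF assms that])
qed

end
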